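(* Let $\omega=e^{2\pi i/6}$, choose a sign $\pm$, and let $r\in\mathbb C\setminus\{0,\omega^{\pm1}\}$. Let $\Psi^\pm_r:\mathsf{PGL}_2(\mathbb Z)\to\mathsf{PGL}_2(\mathbb C)$ be the homomorphism with $$\Psi^\pm_r(T)=\begin{bmatrix}r&1\\0&1\end{bmatrix},\quad \Psi^\pm_r(S)=\begin{bmatrix}1&r^{-1}\\ -r+\omega^{\pm1}&-1\end{bmatrix},\quad \Psi^\pm_r(V)=\begin{bmatrix}1&\frac{1+r^{-1}}{r-\omega^{\pm1}}\\ 1-r&-1\end{bmatrix}.$$ Then there exists $M\in\mathsf{PGL}_2(\mathbb C)$ with $M\,\Psi^\pm_r(g)\,M^{-1}=\alpha(g)$ for all $g\in\mathsf{PGL}_2(\mathbb Z)$ (equivalently $M\Psi^\pm_r(U)M^{-1}=U$, $M\Psi^\pm_r(K)M^{-1}=K$, $M\Psi^\pm_r(V)M^{-1}=UV$) if and only if $r=-\varphi^2$ or $r=-\bar\varphi^2$.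
   Context: $\varphi=\frac{1+\sqrt5}{2}$, $\bar\varphi=\frac{1-\sqrt5}{2}$. An invertible matrix $\begin{bmatrix}a&b\\c&d\end{bmatrix}$ denotes the Möbius map $x\mapsto(ax+b)/(cx+d)$. In $\mathsf{PGL}_2(\mathbb Z)$: $T(x)=1+x$, $S(x)=-1/x$, $U(x)=1/x$, $V(x)=-x$, $K(x)=1-x$; $T,S,V$ generate $\mathsf{PGL}_2(\mathbb Z)$. Dyer's outer automorphism $\alpha$ of $\mathsf{PGL}_2(\mathbb Z)$ is the involutive automorphism with $\alpha(U)=U$, $\alpha(K)=K$, $\alpha(V)=UV$ (so $\alpha(T)=TU$, $\alpha(S)=V$). *)

theory Defs
  imports "HOL-Analysis.Analysis"
begin

text \<open>2x2 complex matrices; an invertible matrix represents the Moebius map x -> (ax+b)/(cx+d),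
  and the matrix product corresponds to composition of maps.\<close>

type_synonym cmat2 = "complex^2^2"

definition mat2 :: "complex \<Rightarrow> complex \<Rightarrow> complex \<Rightarrow> complex \<Rightarrow> cmat2" where
  "mat2 a b c d = (\<chi> i j. if i = 1 then (if j = 1 then a else b) else (if j = 1 then c else d))"

definition pgl_eq :: "cmat2 \<Rightarrow> cmat2 \<Rightarrow> bool" where
  "pgl_eq A B \<longleftrightarrow> (\<exists>c::complex. c \<noteq> 0 \<and> A = mat c ** B)"

definition golden :: real where "golden = (1 + sqrt 5) / 2"
definition golden_bar :: real where "golden_bar = (1 - sqrt 5) / 2"

definition omega6 :: complex where "omega6 = exp (2 * pi * \<i> / 6)"

definition matT :: cmat2 where "matT = mat2 1 1 0 1"
definition matS :: cmat2 where "matS = mat2 0 (-1) 1 0"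
definition matU :: cmat2 where "matU = mat2 0 1 1 0"
definition matV :: cmat2 where "matV = mat2 (-1) 0 0 1"
definition matK :: cmat2 where "matK = mat2 (-1) 1 0 1"

text \<open>The generators T, S, V of PGL_2(Z); they generate it even as a monoid
  (T^-1 = V T V, S and V are involutions), so every element is a word in them.\<close>
datatype gen = GT | GS | GV

definition eval_word :: "(gen \<Rightarrow> cmat2) \<Rightarrow> gen list \<Rightarrow> cmat2" where
  "eval_word f w = foldr (\<lambda>g acc. f g ** acc) w (mat 1)"

definition gen_mat :: "gen \<Rightarrow> cmat2" where
  "gen_mat g = (case g of GT \<Rightarrow> matT | GS \<Rightarrow> matS | GV \<Rightarrow> matV)"

definition alpha_gen :: "gen \<Rightarrow> cmat2" where
  "alpha_gen g = (case g of GT \<Rightarrow> matT ** matU | GS \<Rightarrow> matV | GV \<Rightarrow> matU ** matV)"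

definition Psi_gen :: "bool \<Rightarrow> complex \<Rightarrow> gen \<Rightarrow> cmat2" where
  "Psi_gen pm r g = (let w = (if pm then omega6 else inverse omega6) in
     (case g of
        GT \<Rightarrow> mat2 r 1 0 1
      | GS \<Rightarrow> mat2 1 (inverse r) (- r + w) (-1)
      | GV \<Rightarrow> mat2 1 ((1 + inverse r) / (r - w)) (1 - r) (-1)))"

end

theory Submission
  imports Defs
begin


lemma mat2_eta: "(A::cmat2) = mat2 (A$1$1) (A$1$2) (A$2$1) (A$2$2)"
  unfolding mat2_def by (simp add: vec_eq_iff forall_2)

lemma mat2_mult: "mat2 a b c d ** mat2 e f g h = mat2 (a*e+b*g) (a*f+b*h) (c*e+d*g) (c*f+d*h)"
  unfolding mat2_def matrix_matrix_mult_def by (simp add: vec_eq_iff forall_2 sum_2)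

lemma mat2_eq: "mat2 a b c d = mat2 a' b' c' d' \<longleftrightarrow> a = a' \<and> b = b' \<and> c = c' \<and> d = d'"
  unfolding mat2_def by (simp add: vec_eq_iff forall_2)

lemma mat_mat2: "(mat k :: cmat2) = mat2 k 0 0 k"
  unfolding mat2_def mat_def by (simp add: vec_eq_iff forall_2)

lemma det_mat2: "det (mat2 a b c d) = a*d - b*c"
  unfolding det_2 mat2_def by simp

lemma trace_mat2: "trace (mat2 a b c d) = a + d"
  unfolding trace_def mat2_def by (simp add: sum_2)

lemma mat_comm: "mat k ** (A::cmat2) = A ** mat k"
  apply (subst (1 2) mat2_eta[of A]) by (simp add: mat_mat2 mat2_mult mult.commute)

lemma mat_mat: "mat k ** (mat l :: cmat2) = mat (k*l)"
  by (simp add: mat_mat2 mat2_mult)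

lemma omega6_eq: "omega6 = Complex (1/2) (sqrt 3 / 2)"
proof -
  have "omega6 = cis (pi/3)" unfolding omega6_def cis_conv_exp by (simp add: field_simps)
  thus ?thesis by (simp add: cis.ctr cos_60 sin_60)
qed

lemma omega6_rel: "omega6^2 - omega6 + 1 = 0"
  by (simp add: omega6_eq complex_eq_iff power2_eq_square field_simps)


lemma inv_facts:
  assumes "det (M::cmat2) \<noteq> 0"
  shows "M ** matrix_inv M = mat 1" "matrix_inv M ** M = mat 1"
proof -
  have "invertible M" using assms invertible_det_nz by blast
  then have "\<exists>A'. M ** A' = mat 1 \<and> A' ** M = mat 1" unfolding invertible_def by blast
  from someI_ex[OF this] show "M ** matrix_inv M = mat 1" "matrix_inv M ** M = mat 1"
    unfolding matrix_inv_def by auto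
qed

lemma word_conj:
  assumes "\<And>g. \<exists>c. c \<noteq> 0 \<and> M ** f g = mat c ** a g ** M"
  shows "\<exists>c. c \<noteq> 0 \<and> M ** eval_word f w = mat c ** eval_word a w ** (M::cmat2)"
proof (induction w)
  case Nil
  show ?case by (rule exI[of _ 1]) (simp add: eval_word_def)
next
  case (Cons g w)
  obtain c where c: "c \<noteq> 0" "M ** f g = mat c ** a g ** M" using assms by blast
  obtain d where d: "d \<noteq> 0" "M ** eval_word f w = mat d ** eval_word a w ** M" using Cons by blast
  have ef: "eval_word f (g # w) = f g ** eval_word f w" and ea: "eval_word a (g # w) = a g ** eval_word a w"
    by (simp_all add: eval_word_def)
  have "M ** eval_word f (g # w) = (M ** f g) ** eval_word f w" by (simp add: ef matrix_mul_assoc)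
  also have "\<dots> = mat c ** a g ** (M ** eval_word f w)" by (simp add: c(2) matrix_mul_assoc)
  also have "\<dots> = mat c ** a g ** (mat d ** eval_word a w ** M)" by (simp add: d(2))
  also have "\<dots> = (mat c ** mat d) ** (a g ** eval_word a w) ** M"
  proof -
    have "a g ** (mat d ** (eval_word a w ** M)) = (a g ** mat d) ** (eval_word a w ** M)"
      by (simp add: matrix_mul_assoc)
    also have "\<dots> = mat d ** (a g ** (eval_word a w ** M))"
      by (simp add: mat_comm[of d "a g", symmetric] matrix_mul_assoc)
    finally show ?thesis by (simp add: matrix_mul_assoc[symmetric])
  qed
  also have "\<dots> = mat (c*d) ** eval_word a (g # w) ** M" by (simp add: mat_mat ea)
  finally show ?case using c d by (intro exI[of _ "c*d"]) simp
qed

lemma conj_pgl: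
  assumes "det (M::cmat2) \<noteq> 0" "c \<noteq> 0" "M ** X = mat c ** B ** M"
  shows "pgl_eq (M ** X ** matrix_inv M) B"
proof -
  have "M ** X ** matrix_inv M = mat c ** B ** (M ** matrix_inv M)"
    by (simp add: assms(3) matrix_mul_assoc)
  also have "\<dots> = mat c ** B" using inv_facts[OF assms(1)] by simp
  finally show ?thesis using assms(2) unfolding pgl_eq_def by blast
qed

lemma conj_invariants:
  assumes "det (M::cmat2) \<noteq> 0" "M ** X ** matrix_inv M = Y"
  shows "det X = det Y" "trace X = trace Y"
proof -
  have "det M * det (matrix_inv M) = 1" using inv_facts[OF assms(1)] det_mul[of M "matrix_inv M"]
    by (simp add: det_I)
  then show "det X = det Y" using assms(2) by (metis det_mul mult.commute mult.left_commute mult_1_right)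
  have "trace Y = trace (matrix_inv M ** (M ** X))" using assms(2) trace_mul_sym by metis
  also have "\<dots> = trace X" by (simp add: matrix_mul_assoc inv_facts[OF assms(1)])
  finally show "trace X = trace Y" by simp
qed

lemma golden_facts: "golden^2 + golden_bar^2 = 3" "golden * golden_bar = -1"
  "golden^2 = golden + 1" "golden_bar^2 = golden_bar + 1"
  unfolding golden_def golden_bar_def by (simp_all add: power2_eq_square field_simps)

lemma quad_roots:
  fixes r :: complex
  assumes "r^2 + 3*r + 1 = 0"
  shows "r = - complex_of_real (golden ^ 2) \<or> r = - complex_of_real (golden_bar ^ 2)"
proof -
  have a: "complex_of_real (golden^2) + complex_of_real (golden_bar^2) = 3"
    unfolding of_real_add[symmetric] golden_facts(1) by simp
  have b0: "golden^2 * golden_bar^2 = 1"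
    unfolding power_mult_distrib[symmetric] golden_facts(2) by simp
  have b: "complex_of_real (golden^2) * complex_of_real (golden_bar^2) = 1"
    unfolding of_real_mult[symmetric] b0 by simp
  have "(r + complex_of_real (golden^2)) * (r + complex_of_real (golden_bar^2))
      = r^2 + (complex_of_real (golden^2) + complex_of_real (golden_bar^2)) * r
        + complex_of_real (golden^2) * complex_of_real (golden_bar^2)"
    by (simp add: power2_eq_square algebra_simps)
  also have "\<dots> = r^2 + 3*r + 1" unfolding a b by simp
  finally have p: "(r + complex_of_real (golden^2)) * (r + complex_of_real (golden_bar^2)) = 0"
    using assms by simp
  show ?thesis unfolding eq_neg_iff_add_eq_0 using p by (simp only: mult_eq_0_iff)
qed


lemma real_quad_nz: "(x::real)^2 - x + 1 \<noteq> 0"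
proof -
  have "x^2 - x + 1 = (x - 1/2)^2 + 3/4" by (simp add: power2_eq_square algebra_simps)
  moreover have "(x - 1/2)^2 \<ge> 0" by simp
  ultimately show ?thesis by linarith
qed

lemma gens:
  fixes S W r ri k :: complex
  assumes SR: "S^2 = S + 1" and WR: "W^2 - W + 1 = 0" and rS: "r = - S - 1"
    and ri: "r * ri = 1" and k: "k * (r - W) = 1"
  defines "M \<equiv> mat2 (2*S) (1 - S - 2*W + S*W) 2 (-1 - W + S*W)"
  shows "M ** mat2 r 1 0 1 = mat (-S) ** (matT ** matU) ** M"
    "M ** mat2 1 ri (- r + W) (-1) = mat ((1-S)*(1-W)) ** matV ** M"
    "M ** mat2 1 ((1 + ri) * k) (1 - r) (-1) = mat ((2*W-2)*k) ** (matU ** matV) ** M"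
proof -
  show "M ** mat2 r 1 0 1 = mat (-S) ** (matT ** matU) ** M"
    unfolding M_def matT_def matU_def mat_mat2 mat2_mult mat2_eq
    apply (intro conjI)
    subgoal using SR WR rS by algebra
    subgoal using SR WR rS by algebra
    subgoal using SR WR rS by algebra
    subgoal using SR WR rS by algebra
    done
  show "M ** mat2 1 ri (- r + W) (-1) = mat ((1-S)*(1-W)) ** matV ** M"
    unfolding M_def matV_def mat_mat2 mat2_mult mat2_eq
    apply (intro conjI)
    subgoal using SR WR rS ri by algebra
    subgoal using SR WR rS ri by algebra
    subgoal using SR WR rS ri by algebra
    subgoal using SR WR rS ri by algebra
    done
  show "M ** mat2 1 ((1 + ri) * k) (1 - r) (-1) = mat ((2*W-2)*k) ** (matU ** matV) ** M"
    unfolding M_def matV_def matU_def mat_mat2 mat2_mult mat2_eq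
    apply (intro conjI)
    subgoal using SR WR rS ri k by algebra
    subgoal using SR WR rS ri k by algebra
    subgoal using SR WR rS ri k by algebra
    subgoal using SR WR rS ri k by algebra
    done
qed

theorem mainTheorem12:
  fixes pm :: bool and r :: complex
  assumes "r \<noteq> 0" and "r \<noteq> (if pm then omega6 else inverse omega6)"
  shows "(\<exists>M::cmat2. det M \<noteq> 0 \<and>
            (\<forall>w. pgl_eq (M ** eval_word (Psi_gen pm r) w ** matrix_inv M)
                         (eval_word alpha_gen w)))
         \<longleftrightarrow> (r = - complex_of_real (golden ^ 2) \<or> r = - complex_of_real (golden_bar ^ 2))"
proof -
  define W where "W = (if pm then omega6 else inverse omega6)"
  have o0: "omega6 \<noteq> 0" using omega6_rel by auto
  have WR: "W^2 - W + 1 = 0"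
  proof (cases pm)
    case True then show ?thesis using omega6_rel by (simp add: W_def)
  next
    case False
    have x: "inverse omega6 * omega6 = 1" using o0 by simp
    have "(inverse omega6)^2 - inverse omega6 + 1 = 0" using x omega6_rel by algebra
    then show ?thesis using False by (simp add: W_def)
  qed
  have PsiT: "Psi_gen pm r GT = mat2 r 1 0 1" by (simp add: Psi_gen_def)
  have PsiS: "Psi_gen pm r GS = mat2 1 (inverse r) (-r + W) (-1)" by (simp add: Psi_gen_def W_def Let_def)
  have PsiV: "Psi_gen pm r GV = mat2 1 ((1 + inverse r) / (r - W)) (1 - r) (-1)"
    by (simp add: Psi_gen_def W_def Let_def)
  have al: "alpha_gen GT = matT ** matU" "alpha_gen GS = matV" "alpha_gen GV = matU ** matV"
    by (simp_all add: alpha_gen_def)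
  show ?thesis
  proof
    assume "\<exists>M::cmat2. det M \<noteq> 0 \<and>
            (\<forall>w. pgl_eq (M ** eval_word (Psi_gen pm r) w ** matrix_inv M)
                         (eval_word alpha_gen w))"
    then obtain M :: cmat2 where M: "det M \<noteq> 0"
      "\<forall>w. pgl_eq (M ** eval_word (Psi_gen pm r) w ** matrix_inv M) (eval_word alpha_gen w)"
      by blast
    from M(2)[rule_format, of "[GT]"]
    have "pgl_eq (M ** mat2 r 1 0 1 ** matrix_inv M) (matT ** matU)"
      by (simp add: eval_word_def PsiT al)
    then obtain c where c: "c \<noteq> 0" and eq: "M ** mat2 r 1 0 1 ** matrix_inv M = mat c ** (matT ** matU)"
      unfolding pgl_eq_def by blast
    have TU: "mat c ** (matT ** matU) = mat2 c c c 0"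
      by (simp add: matT_def matU_def mat_mat2 mat2_mult)
    have d1: "det (mat2 r 1 0 1) = det (mat2 c c c (0::complex))"
      using conj_invariants(1)[OF M(1) eq] TU by simp
    have t1: "trace (mat2 r 1 0 1) = trace (mat2 c c c (0::complex))"
      using conj_invariants(2)[OF M(1) eq] TU by simp
    have e1: "r = - (c * c)" using d1 unfolding det_mat2 by simp
    have e2: "r + 1 = c" using t1 unfolding trace_mat2 by simp
    have "r^2 + 3*r + 1 = 0" using e1 e2 by algebra
    then show "r = - complex_of_real (golden ^ 2) \<or> r = - complex_of_real (golden_bar ^ 2)"
      by (rule quad_roots)
  next
    assume h: "r = - complex_of_real (golden ^ 2) \<or> r = - complex_of_real (golden_bar ^ 2)"
    obtain s where s: "s^2 = s + 1" "r = - complex_of_real (s^2)" 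
    proof (cases "r = - complex_of_real (golden ^ 2)")
      case True show ?thesis by (rule that[of golden, OF golden_facts(3) True])
    next
      case False
      then have "r = - complex_of_real (golden_bar ^ 2)" using h by blast
      then show ?thesis by (rule that[of golden_bar, OF golden_facts(4)])
    qed
    define S where "S = complex_of_real s"
    have "complex_of_real (s^2) = complex_of_real (s + 1)" using s(1) by (simp only:)
    then have SR: "S^2 = S + 1" unfolding S_def by simp
    have rS: "r = - S - 1" using s(2) SR unfolding S_def by (simp add: of_real_power)
    have ri: "r * (S - 2) = 1" using rS SR by algebra
    have inv: "inverse r = S - 2" by (rule inverse_unique[OF ri])
    have rW: "r - W \<noteq> 0" using assms(2) W_def by simp
    define k where "k = inverse (r - W)"
    have k: "k * (r - W) = 1" using rW by (simp add: k_def)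
    have PsiS': "Psi_gen pm r GS = mat2 1 (S - 2) (-r + W) (-1)" by (simp add: PsiS inv)
    have PsiV': "Psi_gen pm r GV = mat2 1 ((1 + (S - 2)) * k) (1 - r) (-1)"
      by (simp add: PsiV inv k_def divide_inverse)
    define M where "M = mat2 (2*S) (1 - S - 2*W + S*W) 2 (-1 - W + S*W)"
    note G = gens[OF SR WR rS ri k, folded M_def]
    have detM: "det M \<noteq> 0"
    proof
      assume hd: "det M = 0"
      then have hd': "2*S*(-1 - W + S*W) - 2*(1 - S - 2*W + S*W) = 0"
        by (simp add: M_def det_mat2)
      have "(3-S)^2 - (3-S) + 1 = 0" using hd' SR WR by algebra
      moreover have "complex_of_real ((3-s)^2 - (3-s) + 1) = (3-S)^2 - (3-S) + 1"
        unfolding S_def by simp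
      ultimately have "complex_of_real ((3-s)^2 - (3-s) + 1) = 0" by simp
      then have "(3-s)^2 - (3-s) + 1 = 0" by (simp only: of_real_eq_0_iff)
      then show False using real_quad_nz[of "3-s"] by blast
    qed
    have S0: "S \<noteq> 0" using SR by auto
    have S1: "S \<noteq> 1" using SR by auto
    have W1: "W \<noteq> 1" using WR by auto
    have k0: "k \<noteq> 0" using k by auto
    have gall: "\<exists>c. c \<noteq> 0 \<and> M ** Psi_gen pm r g = mat c ** alpha_gen g ** M" for g
    proof (cases g)
      case GT then show ?thesis using G(1) S0 by (intro exI[of _ "-S"]) (simp add: PsiT al)
    next
      case GS then show ?thesis using G(2) S1 W1 by (intro exI[of _ "(1-S)*(1-W)"]) (simp add: PsiS' al)
    next
      case GV then show ?thesis using G(3) W1 k0 by (intro exI[of _ "(2*W-2)*k"]) (simp add: PsiV' al)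
    qed
    show "\<exists>M::cmat2. det M \<noteq> 0 \<and>
            (\<forall>w. pgl_eq (M ** eval_word (Psi_gen pm r) w ** matrix_inv M)
                         (eval_word alpha_gen w))"
    proof (intro exI[of _ M] conjI allI)
      show "det M \<noteq> 0" by (rule detM)
      fix w
      from word_conj[of M "Psi_gen pm r" alpha_gen w, OF gall]
      obtain c where "c \<noteq> 0" "M ** eval_word (Psi_gen pm r) w = mat c ** eval_word alpha_gen w ** M"
        by blast
      then show "pgl_eq (M ** eval_word (Psi_gen pm r) w ** matrix_inv M) (eval_word alpha_gen w)"
        by (rule conj_pgl[OF detM])
    qed
  qed
qed

end
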